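(* Let $T(t)$ and $S(t)$ be chaotic strongly continuous semigroups on Banach spaces $X$ and $Y$, respectively, and let $\alpha$ be a uniform crossnorm on the algebraic tensor product $X\otimes Y$. Then the semigroup $T(t)\otimes S(t)$ on the completion $X\tilde{\otimes}_\alpha Y$ of $(X\otimes Y,\alpha)$ satisfies the recurrent hypercyclicity criterion.
   Context: A strongly continuous semigroup $R(t)$ on a Banach space $Z$ is hypercyclic if some $z\in Z$ has dense orbit $\{R(t)z:t\ge0\}$, and chaotic if it is hypercyclic and the set of periodic points $\{z\in Z:\exists t>0,\ R(t)z=z\}$ is dense in $Z$. A uniform crossnorm on $X\otimes Y$ is a reasonable crossnorm $\alpha$ (in particular $\alpha(x\otimes y)=\|x\|\|y\|$) such that $\|A\otimes B\|\le\|A\|\|B\|$ on $(X\otimes Y,\alpha)$ for all bounded operators $A$ on $X$, $B$ on $Y$. $T(t)\otimes S(t)$ is defined by $x\otimes y\mapsto T(t)x\otimes S(t)y$ and extended by continuity. A strongly continuous semigroup $R(t)$ on a (separable) Banach space $Z$ satisfies the recurrent hypercyclicity criterion if for all non-empty open $U,V,W\subset Z$ with $0\in W$ there is $L\ge0$ such that every interval $[t,t+L]$ contains some $s$ with $R(s)U\cap W\neq\emptyset$ and $R(s)W\cap V\neq\emptyset$. *)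

theory Defs
  imports "HOL-Analysis.Analysis"
begin

text \<open>Strongly continuous (C_0) semigroup on a (real) Banach space; only t \<ge> 0 matters.\<close>
definition strongly_continuous_semigroup :: "(real \<Rightarrow> 'a::banach \<Rightarrow> 'a) \<Rightarrow> bool" where
  "strongly_continuous_semigroup T \<longleftrightarrow>
     (\<forall>t\<ge>0. bounded_linear (T t)) \<and>
     T 0 = id \<and>
     (\<forall>s\<ge>0. \<forall>t\<ge>0. T (s + t) = T s \<circ> T t) \<and>
     (\<forall>x. ((\<lambda>t. T t x) \<longlongrightarrow> x) (at_right 0))"

definition hypercyclic_sg :: "(real \<Rightarrow> 'a::banach \<Rightarrow> 'a) \<Rightarrow> bool" where
  "hypercyclic_sg R \<longleftrightarrow> (\<exists>z. closure {R t z | t. t \<ge> 0} = UNIV)"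

definition chaotic_sg :: "(real \<Rightarrow> 'a::banach \<Rightarrow> 'a) \<Rightarrow> bool" where
  "chaotic_sg R \<longleftrightarrow> hypercyclic_sg R \<and> closure {z. \<exists>t>0. R t z = z} = UNIV"

definition recurrent_hypercyclicity_criterion :: "(real \<Rightarrow> 'a::banach \<Rightarrow> 'a) \<Rightarrow> bool" where
  "recurrent_hypercyclicity_criterion R \<longleftrightarrow>
     (\<forall>U V W. open U \<and> U \<noteq> {} \<and> open V \<and> V \<noteq> {} \<and> open W \<and> 0 \<in> W \<longrightarrow>
        (\<exists>L\<ge>0. \<forall>t\<ge>0. \<exists>s\<in>{t..t+L}. R s ` U \<inter> W \<noteq> {} \<and> R s ` W \<inter> V \<noteq> {}))"

text \<open>A Banach space Z with a map tens realises the completion of the algebraic tensor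
  product X \<otimes> Y w.r.t. the norm alpha inherited from Z (alpha(u) = norm of the image of u).
  Conditions: tens bilinear; the induced linear map from the algebraic tensor product is
  injective (so alpha is a norm on X \<otimes> Y); elementary tensors span a dense subspace.\<close>
definition tensor_completion :: "('a::banach \<Rightarrow> 'b::banach \<Rightarrow> 'c::banach) \<Rightarrow> bool" where
  "tensor_completion tens \<longleftrightarrow>
     (\<forall>y. linear (\<lambda>x. tens x y)) \<and> (\<forall>x. linear (\<lambda>y. tens x y)) \<and>
     (\<forall>(I::nat set) x y. finite I \<and> independent (x ` I) \<and> inj_on x I \<and>
          (\<Sum>i\<in>I. tens (x i) (y i)) = 0 \<longrightarrow> (\<forall>i\<in>I. y i = 0)) \<and>
     closure (span (range (\<lambda>(x, y). tens x y))) = UNIV"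

text \<open>The norm alpha is a reasonable crossnorm: alpha(x \<otimes> y) = |x||y| and for bounded
  linear functionals f, g the functional f \<otimes> g is bounded by |f||g|.\<close>
definition reasonable_crossnorm :: "('a::banach \<Rightarrow> 'b::banach \<Rightarrow> 'c::banach) \<Rightarrow> bool" where
  "reasonable_crossnorm tens \<longleftrightarrow>
     (\<forall>x y. norm (tens x y) = norm x * norm y) \<and>
     (\<forall>f g. bounded_linear f \<and> bounded_linear g \<longrightarrow>
        (\<forall>(I::nat set) x y. finite I \<longrightarrow>
           \<bar>\<Sum>i\<in>I. (f (x i) :: real) * (g (y i) :: real)\<bar>
             \<le> onorm f * onorm g * norm (\<Sum>i\<in>I. tens (x i) (y i))))"

text \<open>Uniform crossnorm: reasonable, and A \<otimes> B has norm \<le> |A||B| on (X \<otimes> Y, alpha).\<close>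
definition uniform_crossnorm :: "('a::banach \<Rightarrow> 'b::banach \<Rightarrow> 'c::banach) \<Rightarrow> bool" where
  "uniform_crossnorm tens \<longleftrightarrow> reasonable_crossnorm tens \<and>
     (\<forall>A B. bounded_linear A \<and> bounded_linear B \<longrightarrow>
        (\<forall>(I::nat set) x y. finite I \<longrightarrow>
           norm (\<Sum>i\<in>I. tens (A (x i)) (B (y i)))
             \<le> onorm A * onorm B * norm (\<Sum>i\<in>I. tens (x i) (y i))))"

end

theory Submission
  imports Defs
begin

lemma ubp:
  fixes A :: "nat \<Rightarrow> 'a::banach \<Rightarrow> 'b::real_normed_vector"
  assumes lin: "\<And>k. bounded_linear (A k)" and pb: "\<And>x. \<exists>B. \<forall>k. norm (A k x) \<le> B"
  shows "\<exists>M. \<forall>k x. norm (A k x) \<le> M * norm x"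
proof -
  define F where "F n = {x. \<forall>k. norm (A k x) \<le> real n}" for n :: nat
  have clF: "closed (F n)" for n
  proof -
    have "F n = (\<Inter>k. {x. norm (A k x) \<le> real n})" by (auto simp: F_def)
    moreover have "closed {x. norm (A k x) \<le> real n}" for k
      by (intro closed_Collect_le continuous_intros linear_continuous_on[OF lin])
    ultimately show ?thesis by auto
  qed
  have unF: "\<Union>(range F) = UNIV"
  proof safe
    fix x
    obtain B where "\<forall>k. norm (A k x) \<le> B" using pb by blast
    moreover obtain n :: nat where "B \<le> real n" using real_arch_simple by blast
    ultimately have "x \<in> F n" unfolding F_def by (auto intro: order_trans)
    then show "x \<in> \<Union>(range F)" by blast
  qed auto
  have "\<exists>n. interior (F n) \<noteq> {}"
  proof (rule ccontr)
    assume "\<not> ?thesis"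
    then have "euclidean interior_of \<Union>(range F) = {}"
      by (intro Baire_category_alt) (auto simp: completely_metrizable_space_euclidean
            euclidean_interior_of clF closed_closedin[symmetric])
    then show False using unF by (simp add: euclidean_interior_of)
  qed
  then obtain n x0 where "x0 \<in> interior (F n)" by blast
  then obtain r where r: "r > 0" "ball x0 r \<subseteq> F n"
    by (meson mem_interior)
  have small: "norm (A k y) \<le> 2 * real n" if "norm y < r" for k y
  proof -
    have "x0 + y \<in> F n" "x0 \<in> F n" using r that by (auto simp: dist_norm)
    then have "norm (A k (x0 + y)) \<le> real n" "norm (A k x0) \<le> real n" by (auto simp: F_def)
    moreover have "A k y = A k (x0 + y) - A k x0"
      using linear_add[OF bounded_linear.linear[OF lin]] by simp
    ultimately show ?thesis by (metis norm_triangle_ineq4 order_trans add_mono mult_2)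
  qed
  have "norm (A k y) \<le> (4 * real n / r) * norm y" for k y
  proof (cases "y = 0")
    case True then show ?thesis using linear_0[OF bounded_linear.linear[OF lin]] by simp
  next
    case False
    define c where "c = r / (2 * norm y)"
    have c: "c > 0" using r False by (simp add: c_def)
    have "norm (c *\<^sub>R y) < r" using r False by (simp add: c_def)
    then have "norm (A k (c *\<^sub>R y)) \<le> 2 * real n" by (rule small)
    moreover have "A k (c *\<^sub>R y) = c *\<^sub>R A k y"
      using linear_scale[OF bounded_linear.linear[OF lin]] by simp
    ultimately have "c * norm (A k y) \<le> 2 * real n" using c by simp
    then have "norm (A k y) \<le> 2 * real n / c" using c by (simp add: field_simps)
    also have "2 * real n / c = (4 * real n / r) * norm y" using r False by (simp add: c_def field_simps)
    finally show ?thesis .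
  qed
  then show ?thesis by blast
qed

locale sg =
  fixes T :: "real \<Rightarrow> 'a::banach \<Rightarrow> 'a"
  assumes sgc: "strongly_continuous_semigroup T"
begin

lemma lin: "t \<ge> 0 \<Longrightarrow> bounded_linear (T t)"
  using sgc by (simp add: strongly_continuous_semigroup_def)

lemma T0[simp]: "T 0 x = x"
  using sgc by (simp add: strongly_continuous_semigroup_def)

lemma Tadd: "s \<ge> 0 \<Longrightarrow> t \<ge> 0 \<Longrightarrow> T (s + t) x = T s (T t x)"
  using sgc by (simp add: strongly_continuous_semigroup_def)

lemma Tcomm: "s \<ge> 0 \<Longrightarrow> t \<ge> 0 \<Longrightarrow> T s (T t x) = T t (T s x)"
  using Tadd[of s t x] Tadd[of t s x] by (simp add: add.commute)

lemma Tplus: "t \<ge> 0 \<Longrightarrow> T t (x + y) = T t x + T t y"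
  using lin[of t] by (simp add: linear_add bounded_linear.linear)

lemma Tminus: "t \<ge> 0 \<Longrightarrow> T t (x - y) = T t x - T t y"
  using lin[of t] by (simp add: linear_diff bounded_linear.linear)

lemma Tneg: "t \<ge> 0 \<Longrightarrow> T t (- x) = - T t x"
  using lin[of t] by (simp add: linear_neg bounded_linear.linear)

lemma Tzero[simp]: "t \<ge> 0 \<Longrightarrow> T t 0 = 0"
  using lin[of t] by (simp add: linear_0 bounded_linear.linear)

lemma bnd: assumes "t \<ge> 0" shows "\<exists>K>0. \<forall>x. norm (T t x) \<le> K * norm x"
proof -
  obtain K where "K > 0" "\<forall>x. norm (T t x) \<le> norm x * K"
    using bounded_linear.pos_bounded[OF lin[OF assms]] by blast
  then show ?thesis by (auto simp: mult.commute)
qed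

lemma small: assumes "e > 0" shows "\<exists>d>0. \<forall>t. 0 \<le> t \<and> t < d \<longrightarrow> norm (T t x - x) < e"
proof -
  have "((\<lambda>t. T t x) \<longlongrightarrow> x) (at_right 0)"
    using sgc by (simp add: strongly_continuous_semigroup_def)
  then have "eventually (\<lambda>t. dist (T t x) x < e) (at_right (0::real))"
    using assms by (rule tendstoD)
  then obtain b where b: "b > 0" "\<forall>y>0. y < b \<longrightarrow> dist (T y x) x < e"
    using eventually_at_right[of "0::real" 1] by auto
  show ?thesis
  proof (intro exI[of _ b] conjI allI impI)
    fix t assume "0 \<le> t \<and> t < b"
    then show "norm (T t x - x) < e"
      using b assms by (cases "t = 0") (auto simp: dist_norm)
  qed (use b in auto)
qed

lemma locbdd0: "\<exists>d>0. \<exists>M. \<forall>t x. 0 \<le> t \<and> t \<le> d \<longrightarrow> norm (T t x) \<le> M * norm x"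
proof (rule ccontr)
  assume neg: "\<not> ?thesis"
  have "\<forall>n::nat. \<exists>t x. 0 \<le> t \<and> t \<le> 1 / (real n + 1) \<and> norm (T t x) > real n * norm x"
  proof (intro allI)
    fix n :: nat
    have pos: "1 / (real n + 1) > 0" by simp
    have "\<not> (\<forall>t x. 0 \<le> t \<and> t \<le> 1 / (real n + 1) \<longrightarrow> norm (T t x) \<le> real n * norm x)"
      using neg pos by blast
    then show "\<exists>t x. 0 \<le> t \<and> t \<le> 1 / (real n + 1) \<and> norm (T t x) > real n * norm x"
      by (auto simp: not_le)
  qed
  then obtain t x where tx: "\<And>n. 0 \<le> t n \<and> t n \<le> 1 / (real n + 1) \<and> norm (T (t n) (x n)) > real n * norm (x n)"
    by metis
  have "\<exists>M. \<forall>k y. norm (T (t k) y) \<le> M * norm y"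
  proof (rule ubp)
    show "bounded_linear (T (t k))" for k using tx lin by blast
    fix y
    obtain d where d: "d > 0" "\<forall>s. 0 \<le> s \<and> s < d \<longrightarrow> norm (T s y - y) < 1"
      using small[of 1] by auto
    obtain N :: nat where N: "1 / d < real N" using reals_Archimedean2 by blast
    define B where "B = norm y + 1 + (\<Sum>n<N. norm (T (t n) y))"
    have "norm (T (t k) y) \<le> B" for k
    proof (cases "k < N")
      case True
      have "norm (T (t k) y) \<le> (\<Sum>n<N. norm (T (t n) y))"
        using True by (intro member_le_sum) auto
      then show ?thesis using norm_ge_zero[of y] unfolding B_def by linarith
    next
      case False
      have "t k \<le> 1 / (real k + 1)" using tx by blast
      also have "\<dots> < d"
      proof -
        have "1 / d < real k + 1" using N False by simp
        then show ?thesis using d by (simp add: field_simps)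
      qed
      finally have tk: "t k < d" .
      have "0 \<le> t k" using tx[of k] by simp
      then have "norm (T (t k) y - y) < 1" using d(2) tk by simp
      then have "norm (T (t k) y) \<le> norm y + 1"
        using norm_triangle_sub[of "T (t k) y" y] by linarith
      moreover have "0 \<le> (\<Sum>n<N. norm (T (t n) y))" by (simp add: sum_nonneg)
      ultimately show ?thesis unfolding B_def by linarith
    qed
    then show "\<exists>B. \<forall>k. norm (T (t k) y) \<le> B" by blast
  qed
  then obtain M where M: "\<And>k y. norm (T (t k) y) \<le> M * norm y" by blast
  obtain n :: nat where n: "M < real n" using reals_Archimedean2 by blast
  have "M * norm (x n) \<le> real n * norm (x n)" using n by (intro mult_right_mono) auto
  then show False using M[of n "x n"] tx[of n] by linarith
qed

lemma locbdd: "\<exists>M\<ge>1. \<forall>t x. 0 \<le> t \<and> t \<le> L \<longrightarrow> norm (T t x) \<le> M * norm x"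
proof -
  obtain d M0 where d: "d > 0" and M0: "\<And>t x. 0 \<le> t \<and> t \<le> d \<Longrightarrow> norm (T t x) \<le> M0 * norm x"
    using locbdd0 by blast
  define M where "M = max 1 M0"
  have M: "norm (T t x) \<le> M * norm x" if "0 \<le> t" "t \<le> d" for t x
  proof -
    have "M0 * norm x \<le> M * norm x" by (intro mult_right_mono) (auto simp: M_def)
    then show ?thesis using M0[of t x] that by linarith
  qed
  have M1: "M \<ge> 1" by (simp add: M_def)
  have ind: "\<forall>t x. 0 \<le> t \<and> t \<le> real k * d \<longrightarrow> norm (T t x) \<le> M ^ k * norm x" for k
  proof (induction k)
    case 0 then show ?case by auto
  next
    case (Suc k)
    show ?case
    proof (intro allI impI)
      fix t x assume t: "0 \<le> t \<and> t \<le> real (Suc k) * d"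
      have Mk: "M ^ k \<ge> 1" using M1 by simp
      show "norm (T t x) \<le> M ^ Suc k * norm x"
      proof (cases "t \<le> d")
        case True
        then have "norm (T t x) \<le> M * norm x" using M t by blast
        also have "\<dots> \<le> M ^ Suc k * norm x"
          using Mk M1 by (intro mult_right_mono) (auto simp: mult_le_cancel_left1)
        finally show ?thesis .
      next
        case False
        have "T t x = T d (T (t - d) x)" using Tadd[of d "t - d"] False d by simp
        then have "norm (T t x) \<le> M * norm (T (t - d) x)" using M d by auto
        also have "\<dots> \<le> M * (M ^ k * norm x)"
          using Suc.IH[rule_format, of "t - d" x] t False M1
          by (intro mult_left_mono) (auto simp: algebra_simps)
        finally show ?thesis by simp
      qed
    qed
  qed
  obtain k :: nat where "L / d \<le> real k" using real_arch_simple by blast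
  then have "L \<le> real k * d" using d by (simp add: field_simps)
  show ?thesis
  proof (intro exI[of _ "M ^ k"] conjI allI impI)
    show "1 \<le> M ^ k" using M1 by simp
    fix t x assume "0 \<le> t \<and> t \<le> L"
    then show "norm (T t x) \<le> M ^ k * norm x" using ind[of k] \<open>L \<le> real k * d\<close> by auto
  qed
qed

end

context sg begin

lemma per_nat: assumes "p \<ge> 0" "T p x = x" shows "T (real k * p) x = x"
proof (induction k)
  case 0 then show ?case by simp
next
  case (Suc k)
  have "T (real (Suc k) * p) x = T p (T (real k * p) x)"
    using Tadd[of p "real k * p" x] assms by (simp add: algebra_simps)
  then show ?case using Suc assms by simp
qed

lemma per_shift: assumes "p \<ge> 0" "T p x = x" "d \<ge> 0" shows "T (real k * p + d) x = T d x"
  using Tadd[of d "real k * p" x] per_nat[OF assms(1,2), of k] assms by (simp add: add.commute)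

lemma cont: "t \<ge> 0 \<Longrightarrow> isCont (T t) a"
  using lin linear_continuous_at by blast

lemma open_vim: "t \<ge> 0 \<Longrightarrow> open GG \<Longrightarrow> open (T t -` GG)"
  using cont continuous_open_vimage by blast

end

locale csg = sg +
  assumes ch: "chaotic_sg T"
begin

lemma per_dense: assumes "open GG" "GG \<noteq> {}" shows "\<exists>x\<in>GG. \<exists>p>0. T p x = x"
proof -
  have "closure {z. \<exists>t>0. T t z = z} = UNIV" using ch by (simp add: chaotic_sg_def)
  then have "GG \<inter> closure {z. \<exists>t>0. T t z = z} \<noteq> {}" using assms by simp
  then have "GG \<inter> {z. \<exists>t>0. T t z = z} \<noteq> {}" using open_Int_closure_eq_empty[OF assms(1)] by blast
  then show ?thesis by blast
qed

lemma hc: "\<exists>h. closure {T t h | t. t \<ge> 0} = UNIV"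
  using ch by (simp add: chaotic_sg_def hypercyclic_sg_def)

lemma orbit_meets: assumes "closure {T t h | t. t \<ge> 0} = UNIV" "open GG" "GG \<noteq> {}"
  shows "\<exists>t\<ge>0. T t h \<in> GG"
proof -
  have "GG \<inter> closure {T t h | t. t \<ge> 0} \<noteq> {}" using assms by simp
  then have "GG \<inter> {T t h | t. t \<ge> 0} \<noteq> {}" using open_Int_closure_eq_empty[OF assms(2)] by blast
  then show ?thesis by blast
qed

lemma trans: assumes "open O1" "O1 \<noteq> {}" "open O2" "O2 \<noteq> {}"
  shows "\<exists>s\<ge>0. \<exists>x\<in>O1. T s x \<in> O2"
proof -
  obtain h where h: "closure {T t h | t. t \<ge> 0} = UNIV" using hc by blast
  obtain \<tau> where tau: "\<tau> \<ge> 0" "T \<tau> h \<in> O1" using orbit_meets[OF h assms(1,2)] by blast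
  obtain p q where pq: "p \<in> O2" "q > 0" "T q p = p" using per_dense[OF assms(3,4)] by blast
  define k where "k = nat \<lceil>\<tau> / q\<rceil>"
  have "\<tau> / q \<le> real k" unfolding k_def by linarith
  then have kq: "\<tau> \<le> real k * q" using pq(2) by (simp add: field_simps)
  define y where "y = T (real k * q - \<tau>) p"
  have "T \<tau> y = T (\<tau> + (real k * q - \<tau>)) p" unfolding y_def using Tadd[of \<tau> "real k * q - \<tau>" p] tau kq by simp
  also have "\<dots> = p" using per_nat[of q p k] pq by simp
  finally have "y \<in> T \<tau> -` O2" using pq by simp
  moreover have "open (T \<tau> -` O2)" using open_vim tau assms by blast
  ultimately obtain t' where t': "t' \<ge> 0" "T t' h \<in> T \<tau> -` O2" using orbit_meets[OF h] by blast
  have "T t' (T \<tau> h) = T \<tau> (T t' h)" using Tcomm tau t' by blast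
  then show ?thesis using t' tau by (intro exI[of _ t'] conjI bexI[of _ "T \<tau> h"]) auto
qed

end

context csg begin

lemma wprop: assumes "open U" "U \<noteq> {}" "open V" "V \<noteq> {}" "\<epsilon> > 0"
  shows "\<exists>s\<ge>0. (\<exists>x\<in>U. norm (T s x) < \<epsilon>) \<and> (\<exists>w. norm w < \<epsilon> \<and> T s w \<in> V)"
proof -
  obtain n0 x0 where n0: "n0 \<ge> 0" "x0 \<in> U" "T n0 x0 \<in> V" using trans[OF assms(1-4)] by blast
  define U1 where "U1 = U \<inter> T n0 -` V"
  have oU1: "open U1" unfolding U1_def using open_vim[OF n0(1) assms(3)] assms(1) by blast
  have "x0 \<in> U1" using n0 by (simp add: U1_def)
  then obtain x p where xp: "x \<in> U1" "p > 0" "T p x = x" using per_dense[OF oU1] by blast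
  obtain \<rho> where rho: "\<rho> > 0" "ball x \<rho> \<subseteq> U1" using oU1 xp(1) open_contains_ball by blast
  obtain K where K: "K > 0" "\<And>z. norm (T n0 z) \<le> K * norm z" using bnd[OF n0(1)] by blast
  obtain M where M: "M \<ge> 1" "\<And>t z. 0 \<le> t \<and> t \<le> p \<Longrightarrow> norm (T t z) \<le> M * norm z"
    using locbdd[of p] by blast
  define \<eta> where "\<eta> = min \<epsilon> (min (\<rho> / (2 * M)) (\<epsilon> / (2 * K * M)))"
  have eta: "\<eta> > 0" "\<eta> \<le> \<epsilon>" "M * \<eta> < \<rho>" "K * (M * \<eta>) < \<epsilon>"
  proof -
    show "\<eta> > 0" using assms rho M K by (simp add: \<eta>_def)
    show "\<eta> \<le> \<epsilon>" by (simp add: \<eta>_def)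
    have "M * \<eta> \<le> M * (\<rho> / (2 * M))" using M by (intro mult_left_mono) (auto simp: \<eta>_def)
    also have "\<dots> < \<rho>" using M rho by (simp add: field_simps)
    finally show "M * \<eta> < \<rho>" .
    have "K * (M * \<eta>) \<le> K * (M * (\<epsilon> / (2 * K * M)))" using M K by (intro mult_left_mono) (auto simp: \<eta>_def)
    also have "\<dots> < \<epsilon>" using M K assms by (simp add: field_simps)
    finally show "K * (M * \<eta>) < \<epsilon>" .
  qed
  obtain n y where ny: "n \<ge> 0" "y \<in> ball x \<eta>" "T n y \<in> ball 0 \<eta>"
    using trans[of "ball x \<eta>" "ball 0 \<eta>"] eta by auto
  define k where "k = nat \<lceil>n / p\<rceil>"
  have np: "0 \<le> n / p" using ny(1) xp(2) by simp
  then have rk: "real k = of_int \<lceil>n / p\<rceil>" unfolding k_def by simp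
  have "n / p \<le> real k" "real k < n / p + 1" unfolding rk using ceiling_correct[of "n/p"] by linarith+
  then have k1: "n \<le> real k * p" and k2: "real k * p < n + p" using xp(2) by (simp_all add: field_simps)
  define s where "s = real k * p"
  have s0: "s \<ge> 0" using xp(2) by (simp add: s_def)
  have "T s y = T (s - n) (T n y)" using Tadd[of "s - n" n y] k1 ny(1) by (simp add: s_def)
  then have "norm (T s y) \<le> M * norm (T n y)" using M(2)[of "s - n"] k1 k2 by (simp add: s_def)
  also have "\<dots> \<le> M * \<eta>" using ny(3) M by (intro mult_left_mono) auto
  finally have Tsy: "norm (T s y) \<le> M * \<eta>" .
  have Tsx: "T s x = x" unfolding s_def using per_nat[of p x k] xp by simp
  have yU1: "y \<in> U1" using ny(2) eta rho M
    by (smt (verit, best) mem_ball mult_le_cancel_right1 subset_iff)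
  show ?thesis
  proof (intro exI[of _ "n0 + s"] conjI)
    show "n0 + s \<ge> 0" using n0 s0 by simp
    have "T (n0 + s) y = T n0 (T s y)" using Tadd n0 s0 by blast
    then have "norm (T (n0 + s) y) \<le> K * norm (T s y)" using K by simp
    also have "\<dots> \<le> K * (M * \<eta>)" using Tsy K by (intro mult_left_mono) auto
    also have "\<dots> < \<epsilon>" using eta by simp
    finally show "\<exists>x\<in>U. norm (T (n0 + s) x) < \<epsilon>" using yU1 by (auto simp: U1_def)
    have "norm (x - y) < \<epsilon>" using ny(2) eta by (simp add: dist_norm)
    moreover have "T (n0 + s) (x - y) = T n0 (x - T s y)"
      using Tadd[of n0 s] n0 s0 Tminus[of s x y] Tsx by simp
    moreover have "x - T s y \<in> U1"
    proof -
      have "dist x (x - T s y) < \<rho>" using Tsy eta by (simp add: dist_norm)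
      then show ?thesis using rho by auto
    qed
    ultimately show "\<exists>w. norm w < \<epsilon> \<and> T (n0 + s) w \<in> V" by (auto simp: U1_def)
  qed
qed

end

lemma mul_le_div: "(K::real) > 0 \<Longrightarrow> x \<le> b / (2*K) \<Longrightarrow> K * x \<le> b / 2"
  by (simp add: pos_le_divide_eq mult.commute mult.left_commute)

context csg begin

lemma pair: assumes "open U1" "U1 \<noteq> {}" "open U2" "U2 \<noteq> {}" "open V1" "V1 \<noteq> {}" "open V2" "V2 \<noteq> {}"
  shows "\<exists>s\<ge>0. \<exists>x1 x2. x1 \<in> U1 \<and> x2 \<in> U2 \<and> T s x1 \<in> V1 \<and> T s x2 \<in> V2"
proof -
  obtain k u where ku: "k \<ge> 0" "u \<in> U1" "T k u \<in> U2" using trans[OF assms(1-4)] by blast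
  obtain l v where lv: "l \<ge> 0" "v \<in> V1" "T l v \<in> V2" using trans[OF assms(5-8)] by blast
  obtain a where a: "a > 0" "ball u a \<subseteq> U1" using assms(1) ku open_contains_ball by blast
  obtain b where b: "b > 0" "ball (T k u) b \<subseteq> U2" using assms(3) ku open_contains_ball by blast
  obtain c where c: "c > 0" "ball v c \<subseteq> V1" using assms(5) lv open_contains_ball by blast
  obtain d where d: "d > 0" "ball (T l v) d \<subseteq> V2" using assms(7) lv open_contains_ball by blast
  obtain Kk where Kk: "Kk > 0" "\<And>z. norm (T k z) \<le> Kk * norm z" using bnd[OF ku(1)] by blast
  obtain Kl where Kl: "Kl > 0" "\<And>z. norm (T l z) \<le> Kl * norm z" using bnd[OF lv(1)] by blast
  define \<rho> where "\<rho> = min (a/2) (b/(2*Kk))"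
  define \<tau> where "\<tau> = min (c/2) (d/(2*Kl))"
  define e where "e = min (min (a/2) (b/(2*Kl))) (min (c/2) (d/(2*Kk)))"
  have pos: "\<rho> > 0" "\<tau> > 0" "e > 0" using a b c d Kk Kl by (auto simp: \<rho>_def \<tau>_def e_def)
  have r1: "\<rho> \<le> a/2" by (simp add: \<rho>_def)
  have r2: "Kk * \<rho> \<le> b/2" by (rule mul_le_div[OF Kk(1)]) (simp add: \<rho>_def)
  have t1: "\<tau> \<le> c/2" by (simp add: \<tau>_def)
  have t2: "Kl * \<tau> \<le> d/2" by (rule mul_le_div[OF Kl(1)]) (simp add: \<tau>_def)
  have e1: "e \<le> a/2" "e \<le> c/2" by (simp_all add: e_def)
  have e2: "Kl * e \<le> b/2" by (rule mul_le_div[OF Kl(1)]) (simp add: e_def)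
  have e3: "Kk * e \<le> d/2" by (rule mul_le_div[OF Kk(1)]) (simp add: e_def)
  obtain s y w where sw: "s \<ge> 0" "y \<in> ball u \<rho>" "norm (T s y) < e" "norm w < e" "T s w \<in> ball v \<tau>"
    using wprop[of "ball u \<rho>" "ball v \<tau>" e] pos by auto
  have ny: "norm (y - u) < \<rho>" "norm (T s w - v) < \<tau>" using sw by (auto simp: dist_norm norm_minus_commute)
  have g1: "y + w \<in> U1"
  proof -
    have "norm (y + w - u) \<le> norm (y - u) + norm w" using norm_triangle_ineq[of "y - u" w] by (simp add: algebra_simps)
    then have "dist u (y + w) < a" using ny sw r1 e1 by (simp add: dist_norm norm_minus_commute)
    then show ?thesis using a by auto
  qed
  have g2: "T k y + T l w \<in> U2"
  proof -
    have eq: "T k y + T l w - T k u = T k (y - u) + T l w" using Tminus ku by simp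
    have "norm (T k y + T l w - T k u) \<le> norm (T k (y - u)) + norm (T l w)"
      unfolding eq by (rule norm_triangle_ineq)
    also have "\<dots> \<le> Kk * norm (y - u) + Kl * norm w" using Kk Kl by (intro add_mono) auto
    also have "\<dots> < Kk * \<rho> + Kl * e" using ny sw Kk Kl by (intro add_strict_mono) auto
    finally have "dist (T k u) (T k y + T l w) < b" using r2 e2 by (simp add: dist_norm norm_minus_commute)
    then show ?thesis using b by auto
  qed
  have g3: "T s (y + w) \<in> V1"
  proof -
    have eq: "T s (y + w) - v = T s y + (T s w - v)" using Tplus sw by simp
    have "norm (T s (y + w) - v) \<le> norm (T s y) + norm (T s w - v)"
      unfolding eq by (rule norm_triangle_ineq)
    then have "dist v (T s (y + w)) < c" using sw ny t1 e1 by (simp add: dist_norm norm_minus_commute)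
    then show ?thesis using c by auto
  qed
  have g4: "T s (T k y + T l w) \<in> V2"
  proof -
    have "T s (T k y + T l w) - T l v = T k (T s y) + T l (T s w - v)"
      using Tplus[of s] Tminus[of l] Tcomm[of s k] Tcomm[of s l] sw ku lv by simp
    then have "norm (T s (T k y + T l w) - T l v) \<le> norm (T k (T s y)) + norm (T l (T s w - v))"
      by (simp only: norm_triangle_ineq)
    also have "\<dots> \<le> Kk * norm (T s y) + Kl * norm (T s w - v)" using Kk Kl by (intro add_mono) auto
    also have "\<dots> < Kk * e + Kl * \<tau>" using ny sw Kk Kl by (intro add_strict_mono) auto
    finally have "dist (T l v) (T s (T k y + T l w)) < d" using t2 e3 by (simp add: dist_norm norm_minus_commute)
    then show ?thesis using d by auto
  qed
  show ?thesis using g1 g2 g3 g4 sw(1) by blast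
qed

lemma multi: "(\<forall>i<(k::nat). open (U i) \<and> U i \<noteq> {} \<and> open (V i) \<and> V i \<noteq> {}) \<Longrightarrow>
   \<exists>s\<ge>0. \<exists>x. \<forall>i<k. x i \<in> U i \<and> T s (x i) \<in> V i"
proof (induction k arbitrary: U V)
  case 0 show ?case by (intro exI[of _ 0]) auto
next
  case (Suc k)
  show ?case
  proof (cases "k = 0")
    case True
    have "open (U 0)" "U 0 \<noteq> {}" "open (V 0)" "V 0 \<noteq> {}" using Suc.prems by auto
    then obtain s x where "s \<ge> 0" "x \<in> U 0" "T s x \<in> V 0" using trans by blast
    then show ?thesis using True by (intro exI[of _ s] conjI exI[of _ "\<lambda>_. x"]) auto
  next
    case False
    have h0: "open (U 0)" "U 0 \<noteq> {}" "open (V 0)" "V 0 \<noteq> {}" "open (U k)" "U k \<noteq> {}" "open (V k)" "V k \<noteq> {}"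
      using Suc.prems by auto
    obtain n x1 x2 where n: "n \<ge> 0" "x1 \<in> U 0" "x2 \<in> V 0" "T n x1 \<in> U k" "T n x2 \<in> V k"
      using pair[of "U 0" "V 0" "U k" "V k"] h0 by blast
    define U' where "U' = U(0 := U 0 \<inter> T n -` U k)"
    define V' where "V' = V(0 := V 0 \<inter> T n -` V k)"
    have "\<forall>i<k. open (U' i) \<and> U' i \<noteq> {} \<and> open (V' i) \<and> V' i \<noteq> {}"
    proof (intro allI impI)
      fix i assume "i < k"
      show "open (U' i) \<and> U' i \<noteq> {} \<and> open (V' i) \<and> V' i \<noteq> {}"
      proof (cases "i = 0")
        case True
        then show ?thesis using n h0 open_vim[OF n(1)] by (auto simp: U'_def V'_def)
      next
        case False
        then show ?thesis using Suc.prems \<open>i < k\<close> by (auto simp: U'_def V'_def)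
      qed
    qed
    then obtain s x where sx: "s \<ge> 0" "\<forall>i<k. x i \<in> U' i \<and> T s (x i) \<in> V' i" using Suc.IH by blast
    have x0: "x 0 \<in> U 0" "T n (x 0) \<in> U k" "T s (x 0) \<in> V 0" "T n (T s (x 0)) \<in> V k"
      using sx(2) False by (auto simp: U'_def V'_def)
    define x' where "x' = x(k := T n (x 0))"
    have "\<forall>i<Suc k. x' i \<in> U i \<and> T s (x' i) \<in> V i"
    proof (intro allI impI)
      fix i assume "i < Suc k"
      show "x' i \<in> U i \<and> T s (x' i) \<in> V i"
      proof (cases "i = k")
        case True
        then show ?thesis using x0 Tcomm[OF sx(1) n(1)] by (simp add: x'_def)
      next
        case False
        then have "i < k" using \<open>i < Suc k\<close> by simp
        then show ?thesis using sx(2) False by (cases "i = 0") (auto simp: U'_def V'_def x'_def)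
      qed
    qed
    then show ?thesis using sx(1) by blast
  qed
qed

end

definition near :: "real \<Rightarrow> real \<Rightarrow> bool" where
  "near x r \<longleftrightarrow> (\<exists>m::int. \<bar>x - of_int m\<bar> < r)"

lemma near_diff: "near x r \<Longrightarrow> near y r' \<Longrightarrow> near (y - x) (r + r')"
proof -
  assume "near x r" "near y r'"
  then obtain m m' :: int where "\<bar>x - m\<bar> < r" "\<bar>y - m'\<bar> < r'" by (auto simp: near_def)
  then have "\<bar>(y - x) - of_int (m' - m)\<bar> < r + r'" unfolding abs_less_iff by auto
  then show ?thesis unfolding near_def by blast
qed

definition cell :: "nat \<Rightarrow> (nat \<Rightarrow> real) \<Rightarrow> nat \<Rightarrow> real \<Rightarrow> nat list" where
  "cell N q k \<sigma> = map (\<lambda>i. nat \<lfloor>real N * frac (\<sigma> / q i)\<rfloor>) [0..<k]"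

lemma floor_eq_close: assumes "\<lfloor>(A::real)\<rfloor> = \<lfloor>B\<rfloor>" shows "\<bar>A - B\<bar> < 1"
proof -
  have "of_int \<lfloor>A\<rfloor> \<le> A" "A < of_int \<lfloor>A\<rfloor> + 1" using floor_correct[of A] by auto
  moreover have "of_int \<lfloor>A\<rfloor> \<le> B" "B < of_int \<lfloor>A\<rfloor> + 1" using floor_correct[of B] assms by auto
  ultimately show ?thesis unfolding abs_less_iff by linarith
qed

lemma cell_finite: assumes "N > 0" shows "finite (range (cell N q k))"
proof -
  have "cell N q k \<sigma> \<in> {xs. set xs \<subseteq> {..<N} \<and> length xs = k}" for \<sigma>
  proof -
    have "x < N" if xin: "x \<in> set (cell N q k \<sigma>)" for x
    proof -
      obtain i where x: "x = nat \<lfloor>real N * frac (\<sigma> / q i)\<rfloor>" using xin unfolding cell_def set_map by blast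
      have "real N * frac (\<sigma> / q i) < real N" using frac_lt_1 assms by simp
      then have "\<lfloor>real N * frac (\<sigma> / q i)\<rfloor> < int N" by (simp add: floor_less_iff)
      moreover have "0 \<le> \<lfloor>real N * frac (\<sigma> / q i)\<rfloor>" using frac_ge_0 by simp
      ultimately show "x < N" using x by (simp add: nat_less_iff)
    qed
    then show ?thesis by (auto simp: cell_def)
  qed
  then have "range (cell N q k) \<subseteq> {xs. set xs \<subseteq> {..<N} \<and> length xs = k}" by blast
  then show ?thesis by (rule finite_subset) (rule finite_lists_length_eq, simp)
qed

lemma cell_near: assumes "cell N q k a = cell N q k b" "i < k" "N > 0"
  shows "near ((a - b) / q i) (1 / real N)"
proof -
  have "nat \<lfloor>real N * frac (a / q i)\<rfloor> = nat \<lfloor>real N * frac (b / q i)\<rfloor>"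
    using arg_cong[OF assms(1), of "\<lambda>xs. xs ! i"] assms(2) by (simp add: cell_def)
  then have "\<lfloor>real N * frac (a / q i)\<rfloor> = \<lfloor>real N * frac (b / q i)\<rfloor>"
    by (simp add: frac_ge_0 eq_nat_nat_iff)
  then have "\<bar>real N * frac (a / q i) - real N * frac (b / q i)\<bar> < 1"
    by (rule floor_eq_close)
  then have "real N * \<bar>frac (a / q i) - frac (b / q i)\<bar> < 1"
    by (simp add: right_diff_distrib[symmetric] abs_mult)
  then have "\<bar>frac (a / q i) - frac (b / q i)\<bar> < 1 / real N"
    using assms(3) by (simp add: pos_less_divide_eq mult.commute)
  moreover have "frac (a / q i) - frac (b / q i) = (a - b) / q i - of_int (\<lfloor>a / q i\<rfloor> - \<lfloor>b / q i\<rfloor>)"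
    by (simp add: frac_def diff_divide_distrib)
  ultimately show ?thesis unfolding near_def by (intro exI[of _ "\<lfloor>a / q i\<rfloor> - \<lfloor>b / q i\<rfloor>"]) simp
qed

lemma returns: fixes q :: "nat \<Rightarrow> real" assumes "N > 0" shows "\<exists>d\<ge>H. \<forall>i<k. near (d / q i) (1 / real N)"
proof -
  define H' where "H' = \<bar>H\<bar> + 1"
  have H': "H' > 0" "H \<le> H'" by (auto simp: H'_def)
  define f where "f j = cell N q k (real j * H')" for j :: nat
  have "range f \<subseteq> range (cell N q k)" by (auto simp: f_def)
  then have fin: "finite (range f)" using cell_finite[OF assms] finite_subset by blast
  have "\<not> inj f"
  proof
    assume "inj f"
    then have "finite (UNIV :: nat set)" using fin finite_imageD by blast
    then show False by simp
  qed
  then obtain j1 j2 where j: "f j1 = f j2" "j1 \<noteq> j2" unfolding inj_def by blast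
  have "\<exists>a b. f a = f b \<and> a < b"
  proof (cases "j1 < j2")
    case True then show ?thesis using j by blast
  next
    case False then have "j2 < j1" using j by simp
    then show ?thesis using j by metis
  qed
  then obtain a b where ab: "f a = f b" "a < b" by blast
  define d where "d = real b * H' - real a * H'"
  have "d = real (b - a) * H'" using ab by (simp add: d_def of_nat_diff left_diff_distrib)
  moreover have "real (b - a) \<ge> 1" using ab by simp
  ultimately have "d \<ge> H'" using H' by (simp add: mult_le_cancel_right1)
  moreover have "near (d / q i) (1 / real N)" if "i < k" for i
    using cell_near[of N q k "real b * H'" "real a * H'" i] ab that assms by (simp add: f_def d_def)
  ultimately show ?thesis using H' by (intro exI[of _ d]) auto
qed

lemma bohr: fixes q :: "nat \<Rightarrow> real"
  assumes q: "\<And>i. i < k \<Longrightarrow> q i > 0" and \<delta>: "\<delta> > 0"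
  shows "\<exists>L\<ge>0. \<forall>t\<ge>0. \<exists>\<sigma>. t \<le> \<sigma> \<and> \<sigma> \<le> t + L \<and>
            (\<forall>i<k. \<exists>m::nat. real m * q i \<le> \<sigma> \<and> \<sigma> < real m * q i + \<delta>)"
proof -
  define Q where "Q = 1 + (\<Sum>i<k. q i)"
  have Qq: "q i \<le> Q" if "i < k" for i
  proof -
    have "q i \<le> (\<Sum>i<k. q i)" using that q by (intro member_le_sum) (auto intro: less_imp_le)
    then show ?thesis by (simp add: Q_def)
  qed
  have "0 \<le> (\<Sum>i<k. q i)" using q by (intro sum_nonneg) (auto intro: less_imp_le)
  then have Q0: "Q > 0" by (simp add: Q_def)
  obtain n :: nat where n: "4 * Q / \<delta> < real n" using reals_Archimedean2 by blast
  define N where "N = max 3 n"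
  have N3: "real N \<ge> 3" by (simp add: N_def)
  have N0: "N > 0" by (simp add: N_def)
  have "4 * Q / \<delta> < real N" using n by (simp add: N_def)
  then have QN: "4 * Q / real N < \<delta>" using \<delta> N3 by (simp add: field_simps)
  define Cs where "Cs = range (cell N q k)"
  have finC: "finite Cs" using cell_finite[OF N0] by (simp add: Cs_def)
  define \<tau> where "\<tau> \<gamma> = (SOME \<tau>. cell N q k \<tau> = \<gamma>)" for \<gamma>
  have tau: "cell N q k (\<tau> \<gamma>) = \<gamma>" if "\<gamma> \<in> Cs" for \<gamma>
    using that unfolding \<tau>_def Cs_def by (metis (mono_tags, lifting) rangeE someI_ex)
  define dd where "dd \<gamma> = (SOME d. d \<ge> \<bar>\<tau> \<gamma>\<bar> \<and> (\<forall>i<k. near (d / q i) (1 / real N)))" for \<gamma>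
  have dd: "dd \<gamma> \<ge> \<bar>\<tau> \<gamma>\<bar> \<and> (\<forall>i<k. near (dd \<gamma> / q i) (1 / real N))" for \<gamma>
    unfolding dd_def using returns[OF N0, of "\<bar>\<tau> \<gamma>\<bar>" k q] by (rule someI_ex)
  define \<sigma>0 where "\<sigma>0 \<gamma> = \<tau> \<gamma> + dd \<gamma>" for \<gamma>
  have s0: "\<sigma>0 \<gamma> \<ge> 0" for \<gamma> using dd[of \<gamma>] abs_ge_minus_self[of "\<tau> \<gamma>"] by (simp add: \<sigma>0_def)
  define L0 where "L0 = (\<Sum>\<gamma>\<in>Cs. \<sigma>0 \<gamma>)"
  have L0: "\<sigma>0 \<gamma> \<le> L0" if "\<gamma> \<in> Cs" for \<gamma>
    unfolding L0_def using finC that s0 by (intro member_le_sum) auto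
  define \<eta> where "\<eta> = 2 * Q / real N"
  have eta0: "\<eta> \<ge> 0" using Q0 N0 by (simp add: \<eta>_def)
  have nn: "0 \<le> L0 + \<eta>" using L0[of "cell N q k 0"] s0[of "cell N q k 0"] eta0 by (simp add: Cs_def)
  have key: "\<exists>\<sigma>. t \<le> \<sigma> \<and> \<sigma> \<le> t + (L0 + \<eta>) \<and>
            (\<forall>i<k. \<exists>m::nat. real m * q i \<le> \<sigma> \<and> \<sigma> < real m * q i + \<delta>)" if t: "t \<ge> 0" for t
  proof -
    define \<gamma> where "\<gamma> = cell N q k (- t)"
    have gC: "\<gamma> \<in> Cs" by (simp add: \<gamma>_def Cs_def)
    define \<sigma> where "\<sigma> = t + \<sigma>0 \<gamma>"
    have main: "\<exists>m::nat. real m * q i \<le> \<sigma> + \<eta> \<and> \<sigma> + \<eta> < real m * q i + \<delta>" if i: "i < k" for i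
    proof -
      have qi: "q i > 0" using q i by simp
      have n1: "near ((- t - \<tau> \<gamma>) / q i) (1 / real N)"
        using cell_near[of N q k "- t" "\<tau> \<gamma>" i] tau[OF gC] i N0 by (simp add: \<gamma>_def)
      have n2: "near (dd \<gamma> / q i) (1 / real N)" using dd i by blast
      have "near (dd \<gamma> / q i - (- t - \<tau> \<gamma>) / q i) (1 / real N + 1 / real N)"
        by (rule near_diff[OF n1 n2])
      moreover have "dd \<gamma> / q i - (- t - \<tau> \<gamma>) / q i = \<sigma> / q i"
        by (simp add: \<sigma>_def \<sigma>0_def diff_divide_distrib add_divide_distrib)
      ultimately obtain m :: int where m: "\<bar>\<sigma> / q i - of_int m\<bar> < 2 / real N"
        unfolding near_def by auto
      have "\<sigma> - of_int m * q i = q i * (\<sigma> / q i - of_int m)" using qi by (simp add: field_simps)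
      then have "\<bar>\<sigma> - of_int m * q i\<bar> = q i * \<bar>\<sigma> / q i - of_int m\<bar>" using qi by (simp add: abs_mult)
      also have "\<dots> \<le> q i * (2 / real N)" using m qi by (intro mult_left_mono) auto
      finally have close: "\<bar>\<sigma> - of_int m * q i\<bar> \<le> q i * (2 / real N)" .
      have "q i * (2 / real N) \<le> Q * (2 / real N)" using Qq[OF i] N0 by (intro mult_right_mono) auto
      then have cQ: "q i * (2 / real N) \<le> \<eta>" by (simp add: \<eta>_def mult.commute)
      have "q i * (2 / real N) \<le> q i * (2 / 3)" using qi N3 by (intro mult_left_mono) (auto simp: field_simps)
      then have c3: "q i * (2 / real N) < q i" using qi by linarith
      have sig0: "\<sigma> \<ge> 0" using t s0[of \<gamma>] by (simp add: \<sigma>_def)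
      have "m \<ge> 0"
      proof (rule ccontr)
        assume "\<not> m \<ge> 0"
        then have "of_int m \<le> (-1::real)" by simp
        then have "of_int m * q i \<le> - q i" using qi by (metis mult_minus1 mult_right_mono less_imp_le)
        then show False using close sig0 c3 unfolding abs_le_iff by linarith
      qed
      then have mm: "real (nat m) = of_int m" by simp
      have "\<eta> + \<eta> < \<delta>" using QN by (simp add: \<eta>_def)
      then have "of_int m * q i \<le> \<sigma> + \<eta> \<and> \<sigma> + \<eta> < of_int m * q i + \<delta>"
        using close cQ unfolding abs_le_iff by linarith
      then show ?thesis by (intro exI[of _ "nat m"]) (simp add: mm)
    qed
    show ?thesis
      using main s0[of \<gamma>] L0[OF gC] eta0 by (intro exI[of _ "\<sigma> + \<eta>"]) (auto simp: \<sigma>_def)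
  qed
  show ?thesis using nn key by blast
qed

context csg begin

lemma synd: assumes "\<forall>i<(k::nat). open (U i) \<and> U i \<noteq> {} \<and> open (V i) \<and> V i \<noteq> {}"
  shows "\<exists>L\<ge>0. \<forall>t\<ge>0. \<exists>s. t \<le> s \<and> s \<le> t + L \<and> (\<exists>x. \<forall>i<k. x i \<in> U i \<and> T s (x i) \<in> V i)"
proof -
  obtain s0 x0 where s0: "s0 \<ge> 0" "\<forall>i<k. x0 i \<in> U i \<and> T s0 (x0 i) \<in> V i" using multi[OF assms] by blast
  define U' where "U' i = U i \<inter> T s0 -` V i" for i
  have "\<exists>p q. p \<in> U' i \<and> q > 0 \<and> T q p = p" if i: "i < k" for i
  proof -
    have "open (U' i)" unfolding U'_def using assms i open_vim[OF s0(1)] by blast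
    moreover have "x0 i \<in> U' i" using s0 i by (simp add: U'_def)
    ultimately show ?thesis using per_dense by blast
  qed
  then obtain p q where pq: "\<And>i. i < k \<Longrightarrow> p i \<in> U' i \<and> q i > 0 \<and> T (q i) (p i) = p i" by metis
  obtain K where K: "K > 0" "\<And>z. norm (T s0 z) \<le> K * norm z" using bnd[OF s0(1)] by blast
  have "\<exists>r>0. ball (T s0 (p i)) r \<subseteq> V i" if i: "i < k" for i
    using pq[OF i] assms i open_contains_ball by (auto simp: U'_def)
  then obtain r where r: "\<And>i. i < k \<Longrightarrow> r i > 0 \<and> ball (T s0 (p i)) (r i) \<subseteq> V i" by metis
  have "\<exists>d>0. \<forall>t. 0 \<le> t \<and> t < d \<longrightarrow> norm (T t (p i) - p i) < r i / K" if i: "i < k" for i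
    using small[of "r i / K" "p i"] r[OF i] K by auto
  then obtain d where d: "\<And>i. i < k \<Longrightarrow> d i > 0 \<and> (\<forall>t. 0 \<le> t \<and> t < d i \<longrightarrow> norm (T t (p i) - p i) < r i / K)"
    by metis
  define \<delta> where "\<delta> = Min (insert 1 (d ` {..<k}))"
  have \<delta>: "\<delta> > 0" "\<And>i. i < k \<Longrightarrow> \<delta> \<le> d i" using d by (auto simp: \<delta>_def)
  obtain L where L: "L \<ge> 0" "\<forall>t\<ge>0. \<exists>\<sigma>. t \<le> \<sigma> \<and> \<sigma> \<le> t + L \<and>
            (\<forall>i<k. \<exists>m::nat. real m * q i \<le> \<sigma> \<and> \<sigma> < real m * q i + \<delta>)"
    using bohr[of k q \<delta>] pq \<delta>(1) by blast
  show ?thesis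
  proof (rule exI[of _ "L + s0"], intro conjI allI impI)
    show "L + s0 \<ge> 0" using L s0 by simp
    fix t :: real assume t: "t \<ge> 0"
    obtain \<sigma> where sg: "t \<le> \<sigma>" "\<sigma> \<le> t + L" "\<forall>i<k. \<exists>m::nat. real m * q i \<le> \<sigma> \<and> \<sigma> < real m * q i + \<delta>"
      using L t by blast
    have good: "p i \<in> U i \<and> T (s0 + \<sigma>) (p i) \<in> V i" if i: "i < k" for i
    proof -
      obtain m :: nat where m: "real m * q i \<le> \<sigma>" "\<sigma> < real m * q i + \<delta>" using sg i by blast
      define e where "e = \<sigma> - real m * q i"
      have e: "0 \<le> e" "e < d i" using m \<delta>(2)[OF i] by (auto simp: e_def)
      have "T \<sigma> (p i) = T e (p i)" using per_shift[of "q i" "p i" e m] pq[OF i] e by (simp add: e_def)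
      then have "T (s0 + \<sigma>) (p i) = T s0 (T e (p i))" using Tadd[of s0 \<sigma>] s0 sg t by simp
      then have "T (s0 + \<sigma>) (p i) - T s0 (p i) = T s0 (T e (p i) - p i)" using Tminus s0 by simp
      then have "norm (T (s0 + \<sigma>) (p i) - T s0 (p i)) \<le> K * norm (T e (p i) - p i)" using K by simp
      also have "\<dots> < K * (r i / K)" using d[OF i] e K by (intro mult_strict_left_mono) auto
      also have "\<dots> = r i" using K by simp
      finally have "T (s0 + \<sigma>) (p i) \<in> ball (T s0 (p i)) (r i)" by (simp add: dist_norm norm_minus_commute)
      then show ?thesis using r[OF i] pq[OF i] by (auto simp: U'_def)
    qed
    show "\<exists>s. t \<le> s \<and> s \<le> t + (L + s0) \<and> (\<exists>x. \<forall>i<k. x i \<in> U i \<and> T s (x i) \<in> V i)"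
      using good sg s0 by (intro exI[of _ "s0 + \<sigma>"]) auto
  qed
qed

end

lemma sum_split_add: "(\<Sum>i<(m::nat) + n. f i) = (\<Sum>i<m. f i) + (\<Sum>i<n. f (m + i))"
  by (induction n) (simp_all add: add.assoc)

locale tctx =
  fixes tens :: "'a::banach \<Rightarrow> 'b::banach \<Rightarrow> 'c::banach"
  assumes tc: "tensor_completion tens" and uc: "uniform_crossnorm tens"
begin

lemma linl: "linear (\<lambda>x. tens x y)" using tc by (simp add: tensor_completion_def)
lemma linr: "linear (\<lambda>y. tens x y)" using tc by (simp add: tensor_completion_def)
lemma dense: "closure (span (range (\<lambda>(x, y). tens x y))) = UNIV" using tc by (simp add: tensor_completion_def)
lemma tnorm: "norm (tens x y) = norm x * norm y"
  using uc by (simp add: uniform_crossnorm_def reasonable_crossnorm_def)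

lemma tl_diff: "tens (x - x') y = tens x y - tens x' y"
  using linear_diff[OF linl] by simp
lemma tl_scale: "tens (c *\<^sub>R x) y = c *\<^sub>R tens x y"
  using linear_scale[OF linl] by simp
lemma tr_diff: "tens x (y - y') = tens x y - tens x y'"
  using linear_diff[OF linr] by simp

lemma span_rep: assumes "z \<in> span (range (\<lambda>(x, y). tens x y))"
  shows "\<exists>(m::nat) a b. z = (\<Sum>i<m. tens (a i) (b i))"
  using assms
proof (rule span_induct)
  show "subspace {z. \<exists>(m::nat) a b. z = (\<Sum>i<m. tens (a i) (b i))}"
    unfolding subspace_def
  proof (intro conjI ballI allI)
    show "0 \<in> {z. \<exists>(m::nat) a b. z = (\<Sum>i<m. tens (a i) (b i))}" by (auto intro: exI[of _ "0::nat"])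
  next
    fix z1 z2 assume "z1 \<in> {z. \<exists>(m::nat) a b. z = (\<Sum>i<m. tens (a i) (b i))}" "z2 \<in> {z. \<exists>(m::nat) a b. z = (\<Sum>i<m. tens (a i) (b i))}"
    then obtain m1 a1 b1 m2 a2 b2 where z: "z1 = (\<Sum>i<(m1::nat). tens (a1 i) (b1 i))" "z2 = (\<Sum>i<(m2::nat). tens (a2 i) (b2 i))" by blast
    define a where "a i = (if i < m1 then a1 i else a2 (i - m1))" for i
    define b where "b i = (if i < m1 then b1 i else b2 (i - m1))" for i
    have "(\<Sum>i<m1 + m2. tens (a i) (b i)) = (\<Sum>i<m1. tens (a i) (b i)) + (\<Sum>i<m2. tens (a (m1 + i)) (b (m1 + i)))"
      by (rule sum_split_add)
    also have "\<dots> = z1 + z2" unfolding z a_def b_def by simp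
    finally have eq: "z1 + z2 = (\<Sum>i<m1 + m2. tens (a i) (b i))" by simp
    show "z1 + z2 \<in> {z. \<exists>(m::nat) a b. z = (\<Sum>i<m. tens (a i) (b i))}"
      by (rule CollectI, (rule exI)+, rule eq)
  next
    fix c z1 assume "z1 \<in> {z. \<exists>(m::nat) a b. z = (\<Sum>i<m. tens (a i) (b i))}"
    then obtain m a b where z: "z1 = (\<Sum>i<(m::nat). tens (a i) (b i))" by blast
    have eq: "c *\<^sub>R z1 = (\<Sum>i<m. tens (c *\<^sub>R a i) (b i))" unfolding z by (simp add: scaleR_sum_right tl_scale)
    show "c *\<^sub>R z1 \<in> {z. \<exists>(m::nat) a b. z = (\<Sum>i<m. tens (a i) (b i))}"
      by (rule CollectI, (rule exI)+, rule eq)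
  qed
next
  fix z assume "z \<in> range (\<lambda>(x, y). tens x y)"
  then obtain x y where "z = tens x y" by auto
  then have eq: "z = (\<Sum>i<(1::nat). tens ((\<lambda>_. x) i) ((\<lambda>_. y) i))" by simp
  show "\<exists>(m::nat) a b. z = (\<Sum>i<m. tens (a i) (b i))" by ((rule exI)+, rule eq)
qed

lemma approx:
  assumes D: "\<And>y e. e > 0 \<Longrightarrow> \<exists>b\<in>ball y e. P b" and e: "\<epsilon> > 0"
  shows "\<exists>(m::nat) a b. (\<forall>i<m. P (b i)) \<and> norm (z - (\<Sum>i<m. tens (a i) (b i))) < \<epsilon>"
proof -
  have "z \<in> closure (span (range (\<lambda>(x, y). tens x y)))" using dense by simp
  then obtain z' where z': "z' \<in> span (range (\<lambda>(x, y). tens x y))" "dist z z' < \<epsilon> / 2"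
    using closure_approachableD[of z _ "\<epsilon>/2"] e by auto
  obtain m a b' where zz: "z' = (\<Sum>i<(m::nat). tens (a i) (b' i))" using span_rep[OF z'(1)] by blast
  define \<eta> where "\<eta> i = \<epsilon> / (2 * (real m + 1) * (norm (a i) + 1))" for i
  have eta: "\<eta> i > 0" for i unfolding \<eta>_def using e by (intro divide_pos_pos mult_pos_pos) (auto intro: add_nonneg_pos)
  have "\<exists>bb. bb \<in> ball (b' i) (\<eta> i) \<and> P bb" for i using D[OF eta[of i]] by blast
  then obtain b where b: "\<And>i. b i \<in> ball (b' i) (\<eta> i) \<and> P (b i)" by metis
  have "norm (z' - (\<Sum>i<m. tens (a i) (b i))) = norm (\<Sum>i<m. tens (a i) (b' i - b i))"
    unfolding zz by (simp add: tr_diff sum_subtractf)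
  also have "\<dots> \<le> (\<Sum>i<m. norm (tens (a i) (b' i - b i)))" by (rule norm_sum)
  also have "\<dots> \<le> (\<Sum>i<m. \<epsilon> / (2 * (real m + 1)))"
  proof (rule sum_mono)
    fix i assume "i \<in> {..<m}"
    have nb: "norm (b' i - b i) < \<eta> i" using b[of i] by (simp add: dist_norm)
    have "norm (tens (a i) (b' i - b i)) = norm (a i) * norm (b' i - b i)" by (rule tnorm)
    also have "\<dots> \<le> (norm (a i) + 1) * \<eta> i" using nb by (intro mult_mono) auto
    also have "\<dots> = \<epsilon> / (2 * (real m + 1))"
    proof -
      have p1: "norm (a i) + 1 > 0" by (simp add: add_nonneg_pos)
      have p2: "2 * (real m + 1) > 0" by simp
      have "(norm (a i) + 1) * (\<epsilon> / (2 * (real m + 1) * (norm (a i) + 1)))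
            = (norm (a i) + 1) * ((\<epsilon> / (2 * (real m + 1))) / (norm (a i) + 1))" by simp
      also have "\<dots> = \<epsilon> / (2 * (real m + 1))" using p1 by simp
      finally show ?thesis unfolding \<eta>_def .
    qed
    finally show "norm (tens (a i) (b' i - b i)) \<le> \<epsilon> / (2 * (real m + 1))" .
  qed
  also have "\<dots> = real m * \<epsilon> / (2 * (real m + 1))" by simp
  also have "\<dots> < \<epsilon> / 2" using e by (simp add: field_simps)
  finally have "norm (z' - (\<Sum>i<m. tens (a i) (b i))) < \<epsilon> / 2" .
  moreover have "norm (z - z') < \<epsilon> / 2" using z' by (simp add: dist_norm)
  ultimately have "norm (z - (\<Sum>i<m. tens (a i) (b i))) < \<epsilon>"
    using norm_triangle_lt[of "z - z'" "z' - (\<Sum>i<m. tens (a i) (b i))"] by simp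
  then show ?thesis using b by blast
qed

end

context tctx begin
lemma sum_tens_bound:
  assumes "0 \<le> e" "\<And>i. i < k \<Longrightarrow> norm (f i) \<le> e" "\<And>i. i < k \<Longrightarrow> norm (g i) \<le> B"
  shows "norm (\<Sum>i<(k::nat). tens (f i) (g i)) \<le> real k * (e * B)"
proof -
  have "norm (\<Sum>i<k. tens (f i) (g i)) \<le> (\<Sum>i<k. norm (tens (f i) (g i)))" by (rule norm_sum)
  also have "\<dots> \<le> (\<Sum>i<k. e * B)"
  proof (rule sum_mono)
    fix i assume "i \<in> {..<k}"
    then show "norm (tens (f i) (g i)) \<le> e * B"
      using assms by (simp add: tnorm) (intro mult_mono, auto)
  qed
  also have "\<dots> = real k * (e * B)" by simp
  finally show ?thesis .
qed
end

lemma ceil_mult: assumes "q > 0" "s \<ge> 0"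
  shows "s \<le> real (nat \<lceil>s / q\<rceil>) * q" "real (nat \<lceil>s / q\<rceil>) * q \<le> s + q"
proof -
  have r: "real (nat \<lceil>s / q\<rceil>) = of_int \<lceil>s / q\<rceil>" using assms by simp
  have "s / q \<le> of_int \<lceil>s / q\<rceil>" "of_int \<lceil>s / q\<rceil> < s / q + 1" using ceiling_correct[of "s/q"] by linarith+
  note h = this
  have "(s / q) * q \<le> of_int \<lceil>s / q\<rceil> * q" using h(1) assms by (intro mult_right_mono) auto
  then show "s \<le> real (nat \<lceil>s / q\<rceil>) * q" unfolding r using assms by simp
  have "of_int \<lceil>s / q\<rceil> * q < (s / q + 1) * q" using h(2) assms by (intro mult_strict_right_mono) auto
  then show "real (nat \<lceil>s / q\<rceil>) * q \<le> s + q" unfolding r using assms by (simp add: distrib_right)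
qed

lemma floor_mult: assumes "q > 0" "s \<ge> 0"
  shows "real (nat \<lfloor>s / q\<rfloor>) * q \<le> s" "s < real (nat \<lfloor>s / q\<rfloor>) * q + q"
proof -
  have r: "real (nat \<lfloor>s / q\<rfloor>) = of_int \<lfloor>s / q\<rfloor>" using assms by simp
  have "of_int \<lfloor>s / q\<rfloor> \<le> s / q" "s / q < of_int \<lfloor>s / q\<rfloor> + 1" using floor_correct[of "s/q"] by linarith+
  note h = this
  have "of_int \<lfloor>s / q\<rfloor> * q \<le> (s / q) * q" using h(1) assms by (intro mult_right_mono) auto
  then show "real (nat \<lfloor>s / q\<rfloor>) * q \<le> s" unfolding r using assms by simp
  have "(s / q) * q < (of_int \<lfloor>s / q\<rfloor> + 1) * q" using h(2) assms by (intro mult_strict_right_mono) auto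
  then show "s < real (nat \<lfloor>s / q\<rfloor>) * q + q" unfolding r using assms by (simp add: distrib_right)
qed

theorem corollary2p2:
  fixes T :: "real \<Rightarrow> 'a::banach \<Rightarrow> 'a"
    and S :: "real \<Rightarrow> 'b::banach \<Rightarrow> 'b"
    and tens :: "'a \<Rightarrow> 'b \<Rightarrow> 'c::banach"
    and R :: "real \<Rightarrow> 'c \<Rightarrow> 'c"
  assumes "strongly_continuous_semigroup T" and "chaotic_sg T"
    and "strongly_continuous_semigroup S" and "chaotic_sg S"
    and "tensor_completion tens" and "uniform_crossnorm tens"
    and "\<forall>t\<ge>0. bounded_linear (R t)"
    and "\<forall>t\<ge>0. \<forall>x y. R t (tens x y) = tens (T t x) (S t y)"
  shows "recurrent_hypercyclicity_criterion R"
proof -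
  interpret TT: csg T using assms(1,2) by (simp add: csg_def sg_def csg_axioms_def)
  interpret SS: csg S using assms(3,4) by (simp add: csg_def sg_def csg_axioms_def)
  interpret TC: tctx tens using assms(5,6) by (simp add: tctx_def)
  have Rsum: "R t (\<Sum>i<(k::nat). tens (f i) (g i)) = (\<Sum>i<k. tens (T t (f i)) (S t (g i)))" if "t \<ge> 0" for t k f g
  proof -
    have "linear (R t)" using assms(7) that bounded_linear.linear by blast
    then show ?thesis using assms(8) that by (simp add: linear_sum)
  qed
  have Dper: "\<exists>b\<in>ball y r. \<exists>q>0. S q b = b" if "r > 0" for y r
    using SS.per_dense[of "ball y r"] that by auto
  show ?thesis unfolding recurrent_hypercyclicity_criterion_def
  proof (intro allI impI)
    fix U V W :: "'c set" assume H: "open U \<and> U \<noteq> {} \<and> open V \<and> V \<noteq> {} \<and> open W \<and> 0 \<in> W"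
    obtain \<epsilon>W where eW: "\<epsilon>W > 0" "ball 0 \<epsilon>W \<subseteq> W" using H open_contains_ball by blast
    obtain u1 where u1: "u1 \<in> U" using H by blast
    obtain \<epsilon>U where eU: "\<epsilon>U > 0" "ball u1 \<epsilon>U \<subseteq> U" using H u1 open_contains_ball by blast
    obtain v1 where v1: "v1 \<in> V" using H by blast
    obtain \<epsilon>V where eV: "\<epsilon>V > 0" "ball v1 \<epsilon>V \<subseteq> V" using H v1 open_contains_ball by blast
    have "\<exists>(m::nat) a b. (\<forall>i<m. \<exists>q>0. S q (b i) = b i) \<and> norm (u1 - (\<Sum>i<m. tens (a i) (b i))) < \<epsilon>U / 2"
      by (rule TC.approx) (use Dper eU in auto)
    then obtain m a b where ab: "\<forall>i<(m::nat). \<exists>q>0. S q (b i) = b i" "norm (u1 - (\<Sum>i<m. tens (a i) (b i))) < \<epsilon>U / 2"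
      by blast
    have "\<exists>(n::nat) c e. (\<forall>j<n. \<exists>q>0. S q (e j) = e j) \<and> norm (v1 - (\<Sum>j<n. tens (c j) (e j))) < \<epsilon>V / 2"
      by (rule TC.approx) (use Dper eV in auto)
    then obtain n c e where ce: "\<forall>j<(n::nat). \<exists>q>0. S q (e j) = e j" "norm (v1 - (\<Sum>j<n. tens (c j) (e j))) < \<epsilon>V / 2"
      by blast
    obtain qb where qb: "\<And>i. i < m \<Longrightarrow> qb i > 0 \<and> S (qb i) (b i) = b i" using ab(1) by metis
    obtain qe where qe: "\<And>j. j < n \<Longrightarrow> qe j > 0 \<and> S (qe j) (e j) = e j" using ce(1) by metis
    have "\<forall>i. \<exists>M\<ge>1. \<forall>r z. 0 \<le> r \<and> r \<le> qb i \<longrightarrow> norm (S r z) \<le> M * norm z" using SS.locbdd by blast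
    then obtain Mb where Mb: "\<And>i. Mb i \<ge> 1" "\<And>i r z. 0 \<le> r \<Longrightarrow> r \<le> qb i \<Longrightarrow> norm (S r z) \<le> Mb i * norm z" by metis
    have "\<forall>j. \<exists>M\<ge>1. \<forall>r z. 0 \<le> r \<and> r \<le> qe j \<longrightarrow> norm (S r z) \<le> M * norm z" using SS.locbdd by blast
    then obtain Me where Me: "\<And>j. Me j \<ge> 1" "\<And>j r z. 0 \<le> r \<Longrightarrow> r \<le> qe j \<Longrightarrow> norm (S r z) \<le> Me j * norm z" by metis
    have Mb0: "Mb i \<ge> 0" for i using Mb(1)[of i] by linarith
    have Me0: "Me j \<ge> 0" for j using Me(1)[of j] by linarith
    define B where "B = 1 + (\<Sum>i<m. Mb i * norm (b i)) + (\<Sum>j<n. Me j * norm (e j) + norm (e j))"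
    have s1: "0 \<le> (\<Sum>i<m. Mb i * norm (b i))" by (intro sum_nonneg) (simp add: Mb0)
    have s2: "0 \<le> (\<Sum>j<n. Me j * norm (e j) + norm (e j))" by (intro sum_nonneg) (simp add: Me0)
    have B1: "B \<ge> 1" using s1 s2 by (simp add: B_def)
    have Bb: "norm (S s (b i)) \<le> B" if i: "i < m" and s: "s \<ge> 0" for i s
    proof -
      define k where "k = nat \<lfloor>s / qb i\<rfloor>"
      have qb0: "qb i > 0" using qb i by blast
      define r where "r = s - real k * qb i"
      have r: "0 \<le> r" "r \<le> qb i" using floor_mult[OF qb0 s] by (auto simp: r_def k_def)
      have "S s (b i) = S r (b i)" using SS.per_shift[of "qb i" "b i" r k] qb[OF i] r by (simp add: r_def)
      then have "norm (S s (b i)) \<le> Mb i * norm (b i)" using Mb(2)[OF r] by simp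
      also have "\<dots> \<le> (\<Sum>i<m. Mb i * norm (b i))"
        using i by (intro member_le_sum) (auto simp: Mb0)
      finally show ?thesis using s2 by (simp add: B_def)
    qed
    have Be: "norm (S r (e j)) \<le> B" if j: "j < n" and r: "0 \<le> r" "r \<le> qe j" for j r
    proof -
      have "norm (S r (e j)) \<le> Me j * norm (e j)" using Me(2)[OF r] by simp
      also have "\<dots> \<le> Me j * norm (e j) + norm (e j)" by simp
      also have "\<dots> \<le> (\<Sum>j<n. Me j * norm (e j) + norm (e j))"
        using j by (intro member_le_sum) (auto simp: Me0)
      finally show ?thesis using s1 by (simp add: B_def)
    qed
    define E where "E = min \<epsilon>U (min \<epsilon>V \<epsilon>W)"
    have E: "E > 0" "E \<le> \<epsilon>U" "E \<le> \<epsilon>V" "E \<le> \<epsilon>W" using eU eV eW by (auto simp: E_def)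
    define \<epsilon> where "\<epsilon> = E / (2 * (real (m + n) + 1) * B)"
    have epos: "\<epsilon> > 0" using E B1 by (simp add: \<epsilon>_def)
    have cnt: "real k * (\<epsilon> * B) < E / 2" if "k \<le> m + n" for k
    proof -
      have "\<epsilon> * B = E / (2 * (real (m + n) + 1))" using B1 by (simp add: \<epsilon>_def)
      moreover have "real k * (E / (2 * (real (m + n) + 1))) < E / 2"
      proof -
        have "real k < real (m + n) + 1" using that by linarith
        then have "real k * E < (real (m + n) + 1) * E" using E by (intro mult_strict_right_mono) auto
        then show ?thesis by (simp add: field_simps)
      qed
      ultimately show ?thesis by simp
    qed
    define UT where "UT i = (if i < m then ball (a i) \<epsilon> else ball 0 \<epsilon>)" for i
    define VT where "VT i = (if i < m then ball 0 \<epsilon> else ball (c (i - m)) \<epsilon>)" for i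
    have "\<forall>i<m + n. open (UT i) \<and> UT i \<noteq> {} \<and> open (VT i) \<and> VT i \<noteq> {}"
      using epos by (auto simp: UT_def VT_def)
    then obtain L where L: "L \<ge> 0" "\<forall>t\<ge>0. \<exists>s. t \<le> s \<and> s \<le> t + L \<and> (\<exists>x. \<forall>i<m + n. x i \<in> UT i \<and> T s (x i) \<in> VT i)"
      using TT.synd by blast
    show "\<exists>L\<ge>0. \<forall>t\<ge>0. \<exists>s\<in>{t..t + L}. R s ` U \<inter> W \<noteq> {} \<and> R s ` W \<inter> V \<noteq> {}"
    proof (rule exI[of _ L], intro conjI allI impI)
      show "L \<ge> 0" by fact
      fix t :: real assume t: "t \<ge> 0"
      obtain s x where s: "t \<le> s" "s \<le> t + L" and x: "\<forall>i<m + n. x i \<in> UT i \<and> T s (x i) \<in> VT i"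
        using L t by blast
      have s0: "s \<ge> 0" using s t by simp
      have xa: "norm (x i - a i) \<le> \<epsilon>" "norm (T s (x i)) \<le> \<epsilon>" if "i < m" for i
      proof -
        have "i < m + n" using that by simp
        then have "x i \<in> UT i \<and> T s (x i) \<in> VT i" using x by blast
        then have "x i \<in> ball (a i) \<epsilon>" "T s (x i) \<in> ball 0 \<epsilon>" using that by (auto simp: UT_def VT_def)
        then show "norm (x i - a i) \<le> \<epsilon>" "norm (T s (x i)) \<le> \<epsilon>" by (auto simp: dist_norm norm_minus_commute)
      qed
      have xc: "norm (x (m + j)) \<le> \<epsilon>" "norm (T s (x (m + j)) - c j) \<le> \<epsilon>" if "j < n" for j
      proof -
        have "m + j < m + n" using that by simp
        then have "x (m + j) \<in> UT (m + j) \<and> T s (x (m + j)) \<in> VT (m + j)" using x by blast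
        then have "x (m + j) \<in> ball 0 \<epsilon>" "T s (x (m + j)) \<in> ball (c j) \<epsilon>" by (auto simp: UT_def VT_def)
        then show "norm (x (m + j)) \<le> \<epsilon>" "norm (T s (x (m + j)) - c j) \<le> \<epsilon>"
          by (auto simp: dist_norm norm_minus_commute)
      qed
      define u where "u = (\<Sum>i<m. tens (x i) (b i))"
      have uU: "u \<in> U"
      proof -
        have "(\<Sum>i<m. tens (a i) (b i)) - u = (\<Sum>i<m. tens (a i - x i) (b i))"
          by (simp add: u_def TC.tl_diff sum_subtractf)
        also have "norm \<dots> \<le> real m * (\<epsilon> * B)"
          using xa Bb[of _ 0] epos by (intro TC.sum_tens_bound) (auto simp: norm_minus_commute)
        also have "\<dots> < E / 2" using cnt[of m] by simp
        finally have "norm ((\<Sum>i<m. tens (a i) (b i)) - u) < \<epsilon>U / 2" using E by simp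
        then have "dist u1 u < \<epsilon>U" using ab(2) norm_triangle_lt[of "u1 - (\<Sum>i<m. tens (a i) (b i))" "(\<Sum>i<m. tens (a i) (b i)) - u"]
          by (simp add: dist_norm)
        then show ?thesis using eU by auto
      qed
      have RuW: "R s u \<in> W"
      proof -
        have "R s u = (\<Sum>i<m. tens (T s (x i)) (S s (b i)))" using Rsum s0 by (simp add: u_def)
        then have "norm (R s u) \<le> real m * (\<epsilon> * B)"
          using xa Bb s0 epos by (simp, intro TC.sum_tens_bound) auto
        also have "\<dots> < E / 2" using cnt[of m] by simp
        finally have "norm (R s u) < \<epsilon>W" using E by simp
        then show ?thesis using eW by auto
      qed
      define r where "r j = real (nat \<lceil>s / qe j\<rceil>) * qe j - s" for j
      have r: "0 \<le> r j" "r j \<le> qe j" if "j < n" for j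
        using ceil_mult[of "qe j" s] qe[OF that] s0 by (auto simp: r_def)
      have Sr: "S s (S (r j) (e j)) = e j" if j: "j < n" for j
      proof -
        have "S s (S (r j) (e j)) = S (s + r j) (e j)" using SS.Tadd[of s "r j"] s0 r[OF j] by simp
        also have "s + r j = real (nat \<lceil>s / qe j\<rceil>) * qe j" by (simp add: r_def)
        finally show ?thesis using SS.per_nat[of "qe j" "e j"] qe[OF j] by simp
      qed
      define w where "w = (\<Sum>j<n. tens (x (m + j)) (S (r j) (e j)))"
      have wW: "w \<in> W"
      proof -
        have "norm w \<le> real n * (\<epsilon> * B)"
          unfolding w_def using xc Be r epos by (intro TC.sum_tens_bound) auto
        also have "\<dots> < E / 2" using cnt[of n] by simp
        finally have "norm w < \<epsilon>W" using E by simp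
        then show ?thesis using eW by auto
      qed
      have RwV: "R s w \<in> V"
      proof -
        have "R s w = (\<Sum>j<n. tens (T s (x (m + j))) (e j))" using Rsum s0 Sr by (simp add: w_def)
        then have "R s w - (\<Sum>j<n. tens (c j) (e j)) = (\<Sum>j<n. tens (T s (x (m + j)) - c j) (e j))"
          by (simp add: TC.tl_diff sum_subtractf)
        then have "norm (R s w - (\<Sum>j<n. tens (c j) (e j))) \<le> real n * (\<epsilon> * B)"
          using xc Be[of _ 0] epos by (simp, intro TC.sum_tens_bound) (auto simp: qe less_imp_le)
        also have "\<dots> < E / 2" using cnt[of n] by simp
        finally have "norm ((\<Sum>j<n. tens (c j) (e j)) - R s w) < \<epsilon>V / 2" using E by (simp add: norm_minus_commute)
        then have "dist v1 (R s w) < \<epsilon>V" using ce(2) norm_triangle_lt[of "v1 - (\<Sum>j<n. tens (c j) (e j))" "(\<Sum>j<n. tens (c j) (e j)) - R s w"]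
          by (simp add: dist_norm)
        then show ?thesis using eV by auto
      qed
      show "\<exists>s\<in>{t..t + L}. R s ` U \<inter> W \<noteq> {} \<and> R s ` W \<inter> V \<noteq> {}"
      proof (rule bexI[of _ s])
        have "R s u \<in> R s ` U \<inter> W" using uU RuW by simp
        moreover have "R s w \<in> R s ` W \<inter> V" using wW RwV by simp
        ultimately show "R s ` U \<inter> W \<noteq> {} \<and> R s ` W \<inter> V \<noteq> {}" by blast
        show "s \<in> {t..t + L}" using s by simp
      qed
    qed
  qed
qed

end
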